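(* Let $f_i(z)$ and $g_i(z)$ be the generating functions (by length) of partial ternary paths ending at level $i$ and of reversed partial ternary paths ending at level $i$, respectively. Then $$\sum_{i\ge0} i\,f_i(z)\,g_i(z)=\frac{3t}{(1-3t)^2(1-t)},$$ where $t$ is the formal power series in $x=z^3$ with $t(1-t)^2=x$, $t=x+2x^2+\cdots$. Consequently the coefficient of $z^{3N}$ in this series is the total area of all ternary paths of length $3N$.
   Context: A partial ternary path: lattice path from $(0,0)$ with steps $(1,1)$, $(1,-2)$, all ordinates $\ge0$, ending at level equal to its final ordinate. A reversed partial ternary path: lattice path from $(0,0)$ with steps $(1,2)$, $(1,-1)$, all ordinates $\ge 0$. A ternary path of length $3N$ is a partial ternary path of length $3N$ ending at level $0$; its area is the sum of its ordinates $c_0+\cdots+c_{3N}$, and the total area is the sum over all such paths. *)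

theory Defs
  imports "HOL-Computational_Algebra.Formal_Power_Series"
begin

(* A lattice path is encoded by its list of ordinate increments (steps). The ordinate
   after k steps is the sum of the first k increments. *)

definition nonneg_path :: "int list \<Rightarrow> bool" where
  "nonneg_path s \<longleftrightarrow> (\<forall>k \<le> length s. sum_list (take k s) \<ge> 0)"

definition partial_ternary :: "nat \<Rightarrow> nat \<Rightarrow> int list set" where
  "partial_ternary n i = {s. set s \<subseteq> {1, -2} \<and> length s = n \<and> nonneg_path s \<and> sum_list s = int i}"

definition rev_partial_ternary :: "nat \<Rightarrow> nat \<Rightarrow> int list set" where
  "rev_partial_ternary n i = {s. set s \<subseteq> {2, -1} \<and> length s = n \<and> nonneg_path s \<and> sum_list s = int i}"

definition fgen :: "nat \<Rightarrow> real fps" where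
  "fgen i = Abs_fps (\<lambda>n. of_nat (card (partial_ternary n i)))"

definition ggen :: "nat \<Rightarrow> real fps" where
  "ggen i = Abs_fps (\<lambda>n. of_nat (card (rev_partial_ternary n i)))"

definition path_area :: "int list \<Rightarrow> int" where
  "path_area s = (\<Sum>k = 0..length s. sum_list (take k s))"

definition total_area :: "nat \<Rightarrow> int" where
  "total_area N = (\<Sum>s \<in> partial_ternary (3 * N) 0. path_area s)"

end

theory Submission
  imports Defs
begin

definition paths :: "int set \<Rightarrow> nat \<Rightarrow> int \<Rightarrow> int list set" where
  "paths A n j = {s. set s \<subseteq> A \<and> length s = n \<and> nonneg_path s \<and> sum_list s = j}"

lemma nonneg_path_snoc: "nonneg_path (s @ [x]) \<longleftrightarrow> nonneg_path s \<and> sum_list s + x \<ge> 0"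
proof
  assume h: "nonneg_path (s @ [x])"
  have "nonneg_path s" unfolding nonneg_path_def
  proof (intro allI impI)
    fix k assume "k \<le> length s"
    then show "0 \<le> sum_list (take k s)" using h[unfolded nonneg_path_def, rule_format, of k] by simp
  qed
  moreover have "sum_list s + x \<ge> 0" using h[unfolded nonneg_path_def, rule_format, of "Suc (length s)"] by simp
  ultimately show "nonneg_path s \<and> sum_list s + x \<ge> 0" by simp
next
  assume h: "nonneg_path s \<and> sum_list s + x \<ge> 0"
  show "nonneg_path (s @ [x])" unfolding nonneg_path_def
  proof (intro allI impI)
    fix k assume k: "k \<le> length (s @ [x])"
    show "0 \<le> sum_list (take k (s @ [x]))"
    proof (cases "k \<le> length s")
      case True then show ?thesis using h unfolding nonneg_path_def by simp
    next
      case False then have "k = Suc (length s)" using k by simp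
      then show ?thesis using h by simp
    qed
  qed
qed

lemma nonneg_path_Nil[simp]: "nonneg_path []" by (simp add: nonneg_path_def)

lemma paths_0: "paths A 0 j = (if j = 0 then {[]} else {})"
  by (auto simp: paths_def)

lemma paths_neg: "j < 0 \<Longrightarrow> paths A n j = {}"
  by (auto simp: paths_def nonneg_path_def dest!: spec[of _ "length _"])

lemma finite_paths: "finite A \<Longrightarrow> finite (paths A n j)"
  unfolding paths_def by (rule finite_subset[OF _ finite_lists_length_eq[of A n]]) auto

lemma paths_Suc:
  assumes "a \<noteq> b" "j \<ge> 0"
  shows "paths {a,b} (Suc n) j = (\<lambda>s. s @ [a]) ` paths {a,b} n (j - a) \<union> (\<lambda>s. s @ [b]) ` paths {a,b} n (j - b)"
proof (rule set_eqI)
  fix s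
  show "s \<in> paths {a,b} (Suc n) j \<longleftrightarrow> s \<in> (\<lambda>s. s @ [a]) ` paths {a,b} n (j - a) \<union> (\<lambda>s. s @ [b]) ` paths {a,b} n (j - b)"
  proof
    assume h: "s \<in> paths {a,b} (Suc n) j"
    then obtain s' x where s: "s = s' @ [x]" by (cases s rule: rev_cases) (auto simp: paths_def)
    with h have "x = a \<or> x = b" by (auto simp: paths_def)
    with h s assms show "s \<in> (\<lambda>s. s @ [a]) ` paths {a,b} n (j - a) \<union> (\<lambda>s. s @ [b]) ` paths {a,b} n (j - b)"
      by (auto simp: paths_def nonneg_path_snoc)
  next
    assume "s \<in> (\<lambda>s. s @ [a]) ` paths {a,b} n (j - a) \<union> (\<lambda>s. s @ [b]) ` paths {a,b} n (j - b)"
    then show "s \<in> paths {a,b} (Suc n) j" using assms by (auto simp: paths_def nonneg_path_snoc)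
  qed
qed

lemma card_paths_Suc:
  assumes "a \<noteq> b" "j \<ge> 0"
  shows "card (paths {a,b} (Suc n) j) = card (paths {a,b} n (j - a)) + card (paths {a,b} n (j - b))"
proof -
  have fin: "finite (paths {a,b} n k)" for k by (rule finite_paths) simp
  have inj: "inj_on (\<lambda>s. s @ [c]) S" for c :: int and S by (auto simp: inj_on_def)
  have disj: "(\<lambda>s. s @ [a]) ` paths {a,b} n (j - a) \<inter> (\<lambda>s. s @ [b]) ` paths {a,b} n (j - b) = {}"
    using assms(1) by auto
  show ?thesis
    unfolding paths_Suc[OF assms]
    by (subst card_Un_disjoint) (auto simp: fin disj card_image[OF inj])
qed

definition cp :: "nat \<Rightarrow> int \<Rightarrow> nat" where "cp n j = card (paths {1,-2} n j)"
definition cr :: "nat \<Rightarrow> int \<Rightarrow> nat" where "cr n j = card (paths {2,-1} n j)"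

lemma cp_0: "cp 0 j = (if j = 0 then 1 else 0)" by (simp add: cp_def paths_0)
lemma cr_0: "cr 0 j = (if j = 0 then 1 else 0)" by (simp add: cr_def paths_0)
lemma cp_neg: "j < 0 \<Longrightarrow> cp n j = 0" by (simp add: cp_def paths_neg)
lemma cr_neg: "j < 0 \<Longrightarrow> cr n j = 0" by (simp add: cr_def paths_neg)
lemma cp_Suc: "j \<ge> 0 \<Longrightarrow> cp (Suc n) j = cp n (j - 1) + cp n (j + 2)"
  unfolding cp_def using card_paths_Suc[of 1 "-2" j n] by simp
lemma cr_Suc: "j \<ge> 0 \<Longrightarrow> cr (Suc n) j = cr n (j - 2) + cr n (j + 1)"
  unfolding cr_def using card_paths_Suc[of 2 "-1" j n] by simp

lemma fgen_nth: "fps_nth (fgen i) n = real (cp n (int i))"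
  by (simp add: fgen_def cp_def paths_def partial_ternary_def)
lemma ggen_nth: "fps_nth (ggen i) n = real (cr n (int i))"
  by (simp add: ggen_def cr_def paths_def rev_partial_ternary_def)


lemma sum_list_uminus: "sum_list (map uminus xs) = - sum_list (xs :: int list)"
  by (induction xs) auto

lemma sum_take_rev: "j \<le> length xs \<Longrightarrow> sum_list (take j (rev xs)) = sum_list xs - sum_list (take (length xs - j) (xs :: int list))"
proof -
  assume j: "j \<le> length xs"
  have "take j (rev xs) = rev (drop (length xs - j) xs)" by (simp add: take_rev)
  then have "sum_list (take j (rev xs)) = sum_list (drop (length xs - j) xs)" by simp
  moreover have "sum_list xs = sum_list (take (length xs - j) xs) + sum_list (drop (length xs - j) xs)"
    by (metis append_take_drop_id sum_list_append)
  ultimately show ?thesis by simp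
qed

definition glue :: "int list \<times> int list \<Rightarrow> int list" where
  "glue p = fst p @ rev (map uminus (snd p))"

lemma glue_in:
  assumes a: "a \<in> paths {1,-2} k (int i)" and b: "b \<in> paths {2,-1} l (int i)"
  shows "glue (a, b) \<in> {s \<in> paths {1,-2} (k + l) 0. sum_list (take k s) = int i}"
proof -
  have la: "length a = k" and lb: "length b = l" using a b by (auto simp: paths_def)
  have sa: "sum_list a = int i" and sb: "sum_list b = int i" using a b by (auto simp: paths_def)
  have na: "nonneg_path a" and nb: "nonneg_path b" using a b by (auto simp: paths_def)
  have seta: "set a \<subseteq> {1,-2}" and setb: "set b \<subseteq> {2,-1}" using a b by (auto simp: paths_def)
  let ?c = "rev (map uminus b)"
  have set: "set (a @ ?c) \<subseteq> {1,-2}" using seta setb by auto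
  have len: "length (a @ ?c) = k + l" using la lb by simp
  have sum: "sum_list (a @ ?c) = 0" using sa sb by (simp add: sum_list_uminus)
  have nn: "nonneg_path (a @ ?c)"
    unfolding nonneg_path_def
  proof (intro allI impI)
    fix j assume j: "j \<le> length (a @ ?c)"
    show "0 \<le> sum_list (take j (a @ ?c))"
    proof (cases "j \<le> k")
      case True
      then show ?thesis using na la unfolding nonneg_path_def by simp
    next
      case False
      then have jk: "j - k \<le> l" using j la lb by simp
      have "sum_list (take j (a @ ?c)) = sum_list a + sum_list (take (j - k) ?c)"
        using False la by simp
      also have "sum_list (take (j - k) ?c) = sum_list (map uminus b) - sum_list (take (l - (j - k)) (map uminus b))"
        using sum_take_rev[of "j - k" "map uminus b"] jk lb by simp
      also have "\<dots> = - sum_list b + sum_list (take (l - (j - k)) b)"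
        by (simp add: take_map sum_list_uminus)
      finally have "sum_list (take j (a @ ?c)) = sum_list (take (l - (j - k)) b)" using sa sb by simp
      moreover have "0 \<le> sum_list (take (l - (j - k)) b)" using nb lb unfolding nonneg_path_def by simp
      ultimately show ?thesis by simp
    qed
  qed
  have tk: "sum_list (take k (a @ ?c)) = int i" using la sa by simp
  show ?thesis unfolding glue_def using set len sum nn tk by (simp add: paths_def)
qed

lemma glue_surj:
  assumes s: "s \<in> paths {1,-2} (k + l) 0" and t: "sum_list (take k s) = int i"
  shows "(take k s, rev (map uminus (drop k s))) \<in> paths {1,-2} k (int i) \<times> paths {2,-1} l (int i)"
proof -
  have ls: "length s = k + l" and ss: "sum_list s = 0" and ns: "nonneg_path s" and sets: "set s \<subseteq> {1,-2}"
    using s by (auto simp: paths_def)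
  let ?d = "drop k s"
  let ?b = "rev (map uminus ?d)"
  have ld: "length ?d = l" using ls by simp
  have sd: "sum_list ?d = - int i"
  proof -
    have "sum_list s = sum_list (take k s) + sum_list ?d" by (metis append_take_drop_id sum_list_append)
    then show ?thesis using ss t by simp
  qed
  have a_in: "take k s \<in> paths {1,-2} k (int i)"
  proof -
    have "set (take k s) \<subseteq> {1,-2}" by (rule order_trans[OF set_take_subset sets])
    moreover have "nonneg_path (take k s)" using ns ls unfolding nonneg_path_def by (simp add: min_def)
    ultimately show ?thesis using ls t by (simp add: paths_def)
  qed
  have setb: "set ?b \<subseteq> {2,-1}"
  proof -
    have d: "set ?d \<subseteq> {1,-2}" by (rule order_trans[OF set_drop_subset sets])
    have "set ?b = uminus ` set ?d" by simp
    also have "\<dots> \<subseteq> uminus ` {1,-2}" using d by (rule image_mono)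
    also have "uminus ` {1,-2::int} = {-1, 2}" by simp
    finally show ?thesis by blast
  qed
  have sb: "sum_list ?b = int i" using sd by (simp add: sum_list_uminus)
  have nb: "nonneg_path ?b"
    unfolding nonneg_path_def
  proof (intro allI impI)
    fix j assume j: "j \<le> length ?b"
    then have jl: "j \<le> l" using ld by simp
    have "sum_list (take j ?b) = sum_list (map uminus ?d) - sum_list (take (l - j) (map uminus ?d))"
      using sum_take_rev[of j "map uminus ?d"] jl ld ls by simp
    also have "\<dots> = int i + sum_list (take (l - j) ?d)" using sd by (simp add: take_map sum_list_uminus)
    also have "\<dots> = sum_list (take (k + (l - j)) s)"
    proof -
      have "take (k + (l - j)) s = take k s @ take (l - j) ?d" by (simp add: take_add)
      then show ?thesis using t by simp
    qed
    finally have "sum_list (take j ?b) = sum_list (take (k + (l - j)) s)" .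
    moreover have "0 \<le> sum_list (take (k + (l - j)) s)" using ns ls unfolding nonneg_path_def by simp
    ultimately show "0 \<le> sum_list (take j ?b)" by simp
  qed
  show ?thesis using a_in setb sb nb ld by (simp add: paths_def)
qed

lemma card_split:
  "card {s \<in> paths {1,-2} (k + l) 0. sum_list (take k s) = int i}
     = card (paths {1,-2} k (int i)) * card (paths {2,-1} l (int i))"
proof -
  let ?A = "paths {1,-2} k (int i) \<times> paths {2,-1} l (int i)"
  let ?S = "{s \<in> paths {1,-2} (k + l) 0. sum_list (take k s) = int i}"
  have inj: "inj_on glue ?A"
  proof (rule inj_onI)
    fix p q assume p: "p \<in> ?A" and q: "q \<in> ?A" and e: "glue p = glue q"
    have lp: "length (fst p) = k" and lq: "length (fst q) = k" using p q by (auto simp: paths_def)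
    have "fst p = fst q" using e lp lq unfolding glue_def by (metis append_eq_append_conv)
    moreover have "rev (map uminus (snd p)) = rev (map uminus (snd q))" using e lp lq unfolding glue_def
      by (metis append_eq_append_conv)
    then have "map uminus (map uminus (snd p)) = map uminus (map uminus (snd q))" by simp
    then have "snd p = snd q" by (simp add: comp_def)
    ultimately show "p = q" by (simp add: prod_eq_iff)
  qed
  have img: "glue ` ?A = ?S"
  proof
    show "glue ` ?A \<subseteq> ?S" using glue_in by auto
  next
    show "?S \<subseteq> glue ` ?A"
    proof
      fix s assume "s \<in> ?S"
      then have s: "s \<in> paths {1,-2} (k + l) 0" "sum_list (take k s) = int i" by auto
      have r: "rev (map uminus (rev (map uminus (drop k s)))) = drop k s"
        by (simp only: rev_map rev_rev_ident map_map comp_def minus_minus map_ident)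
      have "s = glue (take k s, rev (map uminus (drop k s)))" unfolding glue_def by (simp only: r fst_conv snd_conv append_take_drop_id)
      then show "s \<in> glue ` ?A" using glue_surj[OF s] by blast
    qed
  qed
  have "card ?S = card ?A" unfolding img[symmetric] by (rule card_image[OF inj])
  then show ?thesis by (simp add: card_cartesian_product)
qed

definition lo :: "nat \<Rightarrow> real fps \<Rightarrow> bool" where "lo m e \<longleftrightarrow> (\<forall>n<m. fps_nth e n = 0)"

lemma lo_add: "lo m a \<Longrightarrow> lo m b \<Longrightarrow> lo m (a + b)" by (simp add: lo_def)
lemma lo_diff: "lo m a \<Longrightarrow> lo m b \<Longrightarrow> lo m (a - b)" by (simp add: lo_def)
lemma lo_zero: "lo m 0" by (simp add: lo_def)
lemma lo_mult: assumes "lo m a" shows "lo m (c * a)"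
  unfolding lo_def
proof (intro allI impI)
  fix n assume n: "n < m"
  have "\<forall>i\<in>{0..n}. fps_nth c i * fps_nth a (n - i) = 0"
    using assms n unfolding lo_def by simp
  then show "fps_nth (c * a) n = 0" unfolding fps_mult_nth by (rule sum.neutral)
qed
lemma lo_mono: "lo m a \<Longrightarrow> k \<le> m \<Longrightarrow> lo k a" by (simp add: lo_def)
lemma lo_Xpow: "k \<ge> m \<Longrightarrow> lo m (fps_X ^ k * c)" by (simp add: lo_def fps_X_power_mult_nth)
lemma lo_eq: assumes "\<And>m. lo m e" shows "e = 0"
proof (rule fps_ext)
  fix n have "lo (Suc n) e" by fact
  then show "fps_nth e n = fps_nth 0 n" by (simp add: lo_def)
qed

lemma ggen_rec: "ggen i = (if i = 0 then 1 else 0) + fps_X * ((if i \<ge> 2 then ggen (i - 2) else 0) + ggen (i + 1))"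
proof (rule fps_ext)
  fix n
  show "fps_nth (ggen i) n = fps_nth ((if i = 0 then 1 else 0) + fps_X * ((if i \<ge> 2 then ggen (i - 2) else 0) + ggen (i + 1))) n"
  proof (cases n)
    case 0 then show ?thesis by (simp add: ggen_nth cr_0)
  next
    case (Suc k)
    have a: "cr (Suc k) (int i) = cr k (int i - 2) + cr k (int i + 1)" by (rule cr_Suc) simp
    have b: "cr k (int i - 2) = (if i \<ge> 2 then cr k (int (i - 2)) else 0)"
      by (auto simp: cr_neg of_nat_diff)
    have c: "fps_nth ((if i = 0 then 1 else 0) + fps_X * ((if i \<ge> 2 then ggen (i - 2) else 0) + ggen (i + 1))) (Suc k)
       = fps_nth (if i \<ge> 2 then ggen (i - 2) else 0) k + fps_nth (ggen (i + 1)) k"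
      by simp
    have d: "fps_nth (if i \<ge> 2 then ggen (i - 2) else 0) k = real (if i \<ge> 2 then cr k (int (i - 2)) else 0)"
      by (simp add: ggen_nth)
    show ?thesis unfolding Suc c d using a b by (simp add: ggen_nth add_ac)
  qed
qed

context
  fixes T :: "real fps"
  assumes hT: "T * (1 - T)^2 = fps_X" and hT0: "fps_nth T 0 = 0"
begin

definition "tau = fps_compose T (fps_X ^ 3)"
definition "BB = inverse (1 - tau)"
definition "uu = fps_X * BB"

lemma tau_eq: "tau * (1 - tau)^2 = fps_X ^ 3"
proof -
  have z: "fps_nth (fps_X ^ 3 :: real fps) 0 = 0" by simp
  have "fps_compose (T * (1 - T)^2) (fps_X ^ 3) = fps_X ^ 3" using hT by simp
  then show ?thesis
    by (simp add: tau_def fps_compose_mult_distrib[OF z] fps_compose_power[OF z, symmetric]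
                  fps_compose_sub_distrib)
qed

lemma tau0: "fps_nth tau 0 = 0" by (simp add: tau_def hT0)

lemma BB_eq: "(1 - tau) * BB = 1"
  unfolding BB_def by (rule inverse_mult_eq_1') (simp add: tau0)

lemma BB0: "fps_nth BB 0 = 1" by (simp add: BB_def tau0)

lemma I1: "BB = 1 + fps_X * (BB * uu^2)"
  using tau_eq BB_eq unfolding uu_def by algebra

lemma I2: "uu = fps_X * (1 + uu^3)"
  using tau_eq BB_eq unfolding uu_def by algebra

lemma I3: "BB * uu ^ Suc j = fps_X * (BB * uu ^ j + BB * uu ^ (j + 3))"
proof -
  have "BB * uu ^ Suc j = BB * uu ^ j * uu" by simp
  also have "\<dots> = BB * uu ^ j * (fps_X * (1 + uu^3))" using I2 by simp
  also have "\<dots> = fps_X * (BB * uu ^ j + BB * uu ^ (j + 3))" unfolding power_add by (simp add: ring_distribs mult_ac)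
  finally show ?thesis .
qed

lemma uu0: "fps_nth uu 0 = 0" by (simp add: uu_def)

lemma fgen_eq: "fgen i = BB * uu ^ i"
proof -
  have "\<forall>i. fps_nth (BB * uu ^ i) n = real (cp n (int i))" for n
  proof (induction n)
    case 0
    show ?case by (simp add: BB0 uu0 fps_nth_power_0 cp_0 zero_power) 
  next
    case (Suc n)
    show ?case
    proof
      fix i show "fps_nth (BB * uu ^ i) (Suc n) = real (cp (Suc n) (int i))"
      proof (cases i)
        case 0
        have "fps_nth (BB * uu ^ i) (Suc n) = fps_nth (BB * uu^2) n" using 0
          by (subst I1) simp
        also have "\<dots> = real (cp n 2)" using Suc.IH[rule_format, of 2] by simp
        also have "\<dots> = real (cp (Suc n) (int i))" using 0 by (simp add: cp_Suc cp_neg)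
        finally show ?thesis .
      next
        case (Suc j)
        have e: "BB * uu ^ i = fps_X * (BB * uu ^ j + BB * uu ^ (j + 3))"
          by (simp only: Suc I3)
        have "fps_nth (BB * uu ^ i) (Suc n) = fps_nth (BB * uu ^ j) n + fps_nth (BB * uu ^ (j+3)) n"
          unfolding e by simp
        also have "\<dots> = real (cp n (int j)) + real (cp n (int (j+3)))" using Suc.IH by simp
        also have "\<dots> = real (cp (Suc n) (int i))" using Suc
          by (simp add: cp_Suc ac_simps)
        finally show ?thesis .
      qed
    qed
  qed
  then show ?thesis by (intro fps_ext) (simp add: fgen_nth)
qed


lemma Xuu: "fps_X = (1 - tau) * uu" using BB_eq unfolding uu_def by algebra
lemma Xuu2: "fps_X * uu^2 = tau" using tau_eq BB_eq unfolding uu_def by algebra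

lemma lo_uu: "k \<ge> m \<Longrightarrow> lo m (c * uu ^ k)"
proof -
  assume "k \<ge> m"
  have eq: "c * uu ^ k = fps_X ^ k * (c * BB ^ k)" by (simp add: uu_def power_mult_distrib mult_ac)
  show ?thesis unfolding eq by (rule lo_Xpow) fact
qed

lemma aux: "c * (fps_X * (a + b)) * (p * uu^2) = tau * (c * a * p) + (1 - tau) * (c * b * (p * uu^2 * uu))"
  using Xuu Xuu2 by algebra

definition "Sg w M = (\<Sum>i<M. fps_const (w (real i)) * ggen i * uu^i)"

lemma term_rec: "fps_const (w (real i)) * ggen i * uu^i =
   (if i = 0 then fps_const (w 0) else 0)
   + tau * (if i \<ge> 2 then fps_const (w (real (i-2) + 2)) * ggen (i-2) * uu^(i-2) else 0)
   + (1 - tau) * (fps_const (w (real (i+1) - 1)) * ggen (i+1) * uu^(i+1))"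
proof -
  have g: "ggen i = (if i = 0 then 1 else 0) + fps_X * ((if i \<ge> 2 then ggen (i - 2) else 0) + ggen (i + 1))"
    by (rule ggen_rec)
  consider "i = 0" | "i = 1" | k where "i = k + 2" by (metis One_nat_def add_2_eq_Suc' not0_implies_Suc)
  then show ?thesis
  proof cases
    case 1
    have "fps_const (w 0) * (1 + fps_X * ggen (Suc 0)) = fps_const (w 0) + (1 - tau) * (fps_const (w 0) * ggen (Suc 0) * uu)"
      using Xuu by algebra
    then show ?thesis unfolding g using 1 by simp
  next
    case 2
    then show ?thesis unfolding g using Xuu by (simp add: power2_eq_square mult_ac)
  next
    case 3
    have r1: "real (i - 2) + 2 = real i" using 3 by simp
    have r2: "real (i + 1) - 1 = real i" by simp
    have r3: "real k + 2 = real i" using 3 by simp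
    have gi: "ggen i = fps_X * (ggen k + ggen (k + 3))" unfolding g using 3 by (simp add: numeral_3_eq_3)
    have u1: "uu ^ i = uu ^ k * uu^2" using 3 by (simp add: power_add power2_eq_square)
    have u2: "uu ^ (i + 1) = uu ^ k * uu^2 * uu" using 3 by (simp add: power_add power2_eq_square)
    have i1: "i - 2 = k" "i + 1 = k + 3" using 3 by simp_all
    have c1: "(i = 0) = False" "(2 \<le> i) = True" using 3 by simp_all
    show ?thesis unfolding gi u1 r1 r2 c1 if_False if_True i1(1) u2
      unfolding i1(2) add_0_left r3 by (rule aux)
  qed
qed


definition "tt w i = fps_const (w (real i)) * ggen i * uu^i"

lemma Sg_tt: "Sg w M = (\<Sum>i<M. tt w i)" by (simp add: Sg_def tt_def)

lemma lo_tt: "k \<ge> m \<Longrightarrow> lo m (tt w k)"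
  unfolding tt_def by (rule lo_uu)

lemma key: "lo m (Sg w (m+2) - (fps_const (w 0) + (1 - tau) * (Sg (\<lambda>x. w (x - 1)) (m+2) - fps_const (w (-1)) * ggen 0)
              + tau * Sg (\<lambda>x. w (x + 2)) (m+2)))"
proof -
  define w1 where "w1 = (\<lambda>x. w (x - 1))"
  define w2 where "w2 = (\<lambda>x. w (x + 2))"
  define A where "A = (\<lambda>i. if i \<ge> 2 then fps_const (w (real (i-2) + 2)) * ggen (i-2) * uu^(i-2) else 0)"
  define C where "C = (\<lambda>i. fps_const (w (real (i+1) - 1)) * ggen (i+1) * uu^(i+1))"
  have tr: "tt w i = (if i = 0 then fps_const (w 0) else 0) + tau * A i + (1 - tau) * C i" for i
    unfolding tt_def A_def C_def by (rule term_rec)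
  have s1: "Sg w (m+2) = fps_const (w 0) + tau * (\<Sum>i<m+2. A i) + (1 - tau) * (\<Sum>i<m+2. C i)"
    unfolding Sg_tt tr by (simp add: sum.distrib sum_distrib_left del: sum.lessThan_Suc)
  have sA: "(\<Sum>i<m+2. A i) = (\<Sum>j<m. tt w2 j)"
  proof -
    have "(\<Sum>i<m+2. A i) = (\<Sum>i<Suc (Suc m). A i)" by simp
    also have "\<dots> = A 0 + (A 1 + (\<Sum>j<m. A (Suc (Suc j))))" by (simp only: sum.lessThan_Suc_shift One_nat_def)
    also have "\<dots> = (\<Sum>j<m. tt w2 j)" by (simp add: A_def tt_def w2_def)
    finally show ?thesis .
  qed
  have sA2: "Sg w2 (m+2) = (\<Sum>j<m. tt w2 j) + tt w2 m + tt w2 (m+1)"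
    by (simp add: Sg_tt)
  have sC: "(\<Sum>i<m+2. C i) = Sg w1 (m+2) + tt w1 (m+2) - fps_const (w (-1)) * ggen 0"
  proof -
    have "Sg w1 (m+3) = tt w1 0 + (\<Sum>i<m+2. tt w1 (Suc i))"
      unfolding Sg_tt by (simp add: sum.lessThan_Suc_shift numeral_3_eq_3 del: sum.lessThan_Suc)
    moreover have "tt w1 (Suc i) = C i" for i by (simp add: tt_def C_def w1_def)
    moreover have "tt w1 0 = fps_const (w (-1)) * ggen 0" by (simp add: tt_def w1_def)
    moreover have "Sg w1 (m+3) = Sg w1 (m+2) + tt w1 (m+2)" by (simp add: Sg_tt numeral_3_eq_3)
    ultimately show ?thesis by simp
  qed
  have "Sg w (m+2) - (fps_const (w 0) + (1 - tau) * (Sg w1 (m+2) - fps_const (w (-1)) * ggen 0) + tau * Sg w2 (m+2))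
      = (1 - tau) * tt w1 (m+2) - (tau * tt w2 m + tau * tt w2 (m+1))"
    unfolding s1 sA sC sA2 by (simp add: algebra_simps)
  moreover have "lo m ((1 - tau) * tt w1 (m+2) - (tau * tt w2 m + tau * tt w2 (m+1)))"
    by (intro lo_diff lo_add lo_mult lo_tt) simp_all
  ultimately show ?thesis unfolding w1_def w2_def by simp
qed



lemma Sg_add: "Sg (\<lambda>x. f x + g x) M = Sg f M + Sg g M"
  unfolding Sg_def fps_const_add[symmetric] distrib_right sum.distrib by (rule refl)
lemma Sg_diff: "Sg (\<lambda>x. f x - g x) M = Sg f M - Sg g M"
  unfolding Sg_def fps_const_sub[symmetric] left_diff_distrib sum_subtractf by (rule refl)
lemma Sg_smult: "Sg (\<lambda>x. c * f x) M = fps_const c * Sg f M"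
  unfolding Sg_def fps_const_mult[symmetric] sum_distrib_left mult.assoc by (rule refl)
lemma Sg_const: "Sg (\<lambda>x. c) M = fps_const c * Sg (\<lambda>x. 1) M"
  using Sg_smult[of c "\<lambda>x. 1" M] by simp

lemma c2: "fps_const 2 = (2::real fps)" by (simp add: numeral_fps_const)
lemma c4: "fps_const 4 = (4::real fps)" by (simp add: numeral_fps_const)
lemma chalf: "fps_const (1/2) * 2 = (1 :: real fps)"
  unfolding numeral_fps_const by simp

lemma G0: "(1 - tau) * ggen 0 = 1"
proof -
  have "lo m ((1 - tau) * ggen 0 - 1)" for m
  proof -
    have k: "lo m (Sg (\<lambda>x. 1) (m+2) - (fps_const 1 + (1 - tau) * (Sg (\<lambda>x. 1) (m+2) - fps_const 1 * ggen 0)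
              + tau * Sg (\<lambda>x. 1) (m+2)))"
      using key[of m "\<lambda>x. 1"] .
    have eq: "Sg (\<lambda>x. 1) (m+2) - (fps_const 1 + (1 - tau) * (Sg (\<lambda>x. 1) (m+2) - fps_const 1 * ggen 0)
              + tau * Sg (\<lambda>x. 1) (m+2)) = (1 - tau) * ggen 0 - 1"
      unfolding fps_const_1_eq_1 by algebra
    show ?thesis using k unfolding eq .
  qed
  then have "(1 - tau) * ggen 0 - 1 = 0" by (rule lo_eq)
  then show ?thesis by simp
qed

lemma S1_lo: "lo m (Sg (\<lambda>x. x) (m+2) - 3 * tau * inverse ((1 - 3 * tau)^2))"
proof -
  define S0 where "S0 = Sg (\<lambda>x. 1) (m+2)"
  define S1 where "S1 = Sg (\<lambda>x. x) (m+2)"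
  define S2 where "S2 = Sg (\<lambda>x. x^2) (m+2)"
  define G where "G = ggen 0"
  have e1: "Sg (\<lambda>x. x - 1) (m+2) = S1 - S0"
    unfolding S0_def S1_def by (rule Sg_diff)
  have e2: "Sg (\<lambda>x. x + 2) (m+2) = S1 + fps_const 2 * S0"
    unfolding S0_def S1_def Sg_add Sg_const[of 2] by (rule refl)
  have e3: "Sg (\<lambda>x. (x - 1)^2) (m+2) = S2 - fps_const 2 * S1 + S0"
  proof -
    have f: "(\<lambda>x::real. (x - 1)^2) = (\<lambda>x. (x^2 - 2 * x) + 1)" by (auto simp: power2_eq_square algebra_simps)
    have "Sg (\<lambda>x. (x - 1)^2) (m+2) = Sg (\<lambda>x. (x^2 - 2 * x) + 1) (m+2)" by (simp only: f)
    also have "\<dots> = Sg (\<lambda>x. x^2 - 2 * x) (m+2) + Sg (\<lambda>x. 1) (m+2)" by (rule Sg_add)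
    also have "\<dots> = (S2 - Sg (\<lambda>x. 2 * x) (m+2)) + S0" by (simp only: Sg_diff S2_def S0_def)
    also have "\<dots> = S2 - fps_const 2 * S1 + S0" by (simp only: Sg_smult S1_def)
    finally show ?thesis .
  qed
  have e4: "Sg (\<lambda>x. (x + 2)^2) (m+2) = S2 + fps_const 4 * S1 + fps_const 4 * S0"
  proof -
    have f: "(\<lambda>x::real. (x + 2)^2) = (\<lambda>x. (x^2 + 4 * x) + 4)" by (auto simp: power2_eq_square algebra_simps)
    have "Sg (\<lambda>x. (x + 2)^2) (m+2) = Sg (\<lambda>x. (x^2 + 4 * x) + 4) (m+2)" by (simp only: f)
    also have "\<dots> = Sg (\<lambda>x. x^2 + 4 * x) (m+2) + Sg (\<lambda>x. 4) (m+2)" by (rule Sg_add)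
    also have "\<dots> = (S2 + Sg (\<lambda>x. 4 * x) (m+2)) + fps_const 4 * S0" by (simp only: Sg_add Sg_const[of 4] S2_def S0_def)
    also have "\<dots> = S2 + fps_const 4 * S1 + fps_const 4 * S0" by (simp only: Sg_smult S1_def)
    finally show ?thesis .
  qed
  have k1: "lo m (S1 - (fps_const 0 + (1 - tau) * ((S1 - S0) - fps_const (-1) * G) + tau * (S1 + fps_const 2 * S0)))"
    using key[of m "\<lambda>x. x"] unfolding e1 e2 S1_def[symmetric] G_def[symmetric] .
  have k2: "lo m (S2 - (fps_const (0^2) + (1 - tau) * ((S2 - fps_const 2 * S1 + S0) - fps_const ((-1)^2) * G) + tau * (S2 + fps_const 4 * S1 + fps_const 4 * S0)))"
    using key[of m "\<lambda>x. x^2"] unfolding e3 e4 S2_def[symmetric] G_def[symmetric] .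
  have g: "(1 - tau) * G = 1" unfolding G_def by (rule G0)
  have cc: "fps_const (0::real) = 0" "fps_const ((0::real)^2) = 0" "fps_const ((-1::real)^2) = 1" "fps_const (-1::real) = -1"
    by (simp, simp, simp, unfold fps_const_neg[symmetric] fps_const_1_eq_1, rule refl)
  define K1 where "K1 = S1 - (fps_const 0 + (1 - tau) * ((S1 - S0) - fps_const (-1) * G) + tau * (S1 + fps_const 2 * S0))"
  define K2 where "K2 = S2 - (fps_const (0^2) + (1 - tau) * ((S2 - fps_const 2 * S1 + S0) - fps_const ((-1)^2) * G) + tau * (S2 + fps_const 4 * S1 + fps_const 4 * S0))"
  have K1e: "K1 = (1 - 3 * tau) * S0 - 1" unfolding K1_def cc c2 using g by algebra
  have K2e: "K2 = (2 - 6 * tau) * S1 - (1 + 3 * tau) * S0 + 1" unfolding K2_def cc c2 c4 using g by algebra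
  define I where "I = inverse ((1 - 3 * tau)^2)"
  have I0: "fps_nth ((1 - 3 * tau)^2) 0 = 1" by (simp add: tau0 fps_nth_power_0)
  have I: "I * (1 - 3 * tau)^2 = 1" unfolding I_def by (rule inverse_mult_eq_1) (use I0 in simp)
  have "S1 - 3 * tau * I = I * (fps_const (1/2) * ((1 - 3 * tau) * K2 + (1 + 3 * tau) * K1))"
    unfolding K1e K2e using I chalf by algebra
  moreover have "lo m (I * (fps_const (1/2) * ((1 - 3 * tau) * K2 + (1 + 3 * tau) * K1)))"
    using k1 k2 unfolding K1_def[symmetric] K2_def[symmetric] by (intro lo_mult lo_add)
  ultimately show ?thesis unfolding S1_def I_def by simp
qed


lemma partial_eq: "(\<Sum>i<M. of_nat i * fgen i * ggen i) = BB * Sg (\<lambda>x. x) M"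
  unfolding Sg_def sum_distrib_left
proof (rule sum.cong[OF refl])
  fix i
  show "of_nat i * fgen i * ggen i = BB * (fps_const (real i) * ggen i * uu ^ i)"
    unfolding fgen_eq fps_of_nat[symmetric] by (simp only: mult_ac of_nat_id)
qed

lemma target_eq: "3 * tau / ((1 - 3 * tau)^2 * (1 - tau)) = BB * (3 * tau * inverse ((1 - 3 * tau)^2))"
proof -
  have z: "fps_nth ((1 - 3 * tau)^2 * (1 - tau)) 0 \<noteq> 0" by (simp add: tau0 fps_nth_power_0)
  show ?thesis unfolding fps_divide_unit[OF z] fps_inverse_mult BB_def by (simp only: mult_ac)
qed

lemma lo_main: "lo m ((\<Sum>i<m+2. of_nat i * fgen i * ggen i) - 3 * tau / ((1 - 3 * tau)^2 * (1 - tau)))"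
proof -
  have "(\<Sum>i<m+2. of_nat i * fgen i * ggen i) - 3 * tau / ((1 - 3 * tau)^2 * (1 - tau))
     = BB * (Sg (\<lambda>x. x) (m+2) - 3 * tau * inverse ((1 - 3 * tau)^2))"
    unfolding partial_eq target_eq by (simp add: right_diff_distrib)
  then show ?thesis using lo_mult[OF S1_lo] by simp
qed

end

lemma sum_le_length: "set s \<subseteq> {1, -2} \<Longrightarrow> sum_list s \<le> int (length s)"
  by (induction s) auto

lemma area_formula:
  assumes M: "n < M"
  shows "(\<Sum>s\<in>partial_ternary n 0. path_area s)
       = (\<Sum>k=0..n. \<Sum>i<M. int i * int (cp k (int i) * cr (n - k) (int i)))"
proof -
  define P where "P = paths {1,-2} n 0"
  have PT: "partial_ternary n 0 = P" by (simp add: P_def paths_def partial_ternary_def)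
  have finP: "finite P" unfolding P_def by (rule finite_paths) simp
  have "(\<Sum>s\<in>P. path_area s) = (\<Sum>s\<in>P. \<Sum>k=0..n. sum_list (take k s))"
    by (rule sum.cong) (auto simp: path_area_def P_def paths_def)
  also have "\<dots> = (\<Sum>k=0..n. \<Sum>s\<in>P. sum_list (take k s))" by (rule sum.swap)
  also have "\<dots> = (\<Sum>k=0..n. \<Sum>i<M. int i * int (cp k (int i) * cr (n - k) (int i)))"
  proof (rule sum.cong[OF refl])
    fix k assume k: "k \<in> {0..n}"
    define c where "c = (\<lambda>s::int list. sum_list (take k s))"
    have kn: "k \<le> n" using k by simp
    have Pmem: "set s \<subseteq> {1,-2} \<and> length s = n \<and> nonneg_path s \<and> sum_list s = 0" if "s \<in> P" for s
      using that unfolding P_def paths_def by simp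
    have cnn: "c s \<ge> 0" if "s \<in> P" for s
    proof -
      have "nonneg_path s" "length s = n" using Pmem[OF that] by simp_all
      then show ?thesis unfolding c_def nonneg_path_def using kn by simp
    qed
    have cle: "c s \<le> int k" if "s \<in> P" for s
    proof -
      have ss: "set s \<subseteq> {1,-2}" using Pmem[OF that] by simp
      have "set (take k s) \<subseteq> {1,-2}" by (rule order_trans[OF set_take_subset ss])
      then have "c s \<le> int (length (take k s))" unfolding c_def by (rule sum_le_length)
      then show ?thesis by simp
    qed
    have img: "(\<lambda>s. nat (c s)) ` P \<subseteq> {..<M}"
    proof (rule image_subsetI)
      fix s assume "s \<in> P"
      then have "c s \<le> int k" by (rule cle)
      then have "nat (c s) \<le> k" by (simp add: nat_le_iff)
      then show "nat (c s) \<in> {..<M}" using kn M by simp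
    qed
    have "(\<Sum>s\<in>P. c s) = (\<Sum>i<M. \<Sum>s\<in>{x. x \<in> P \<and> nat (c x) = i}. c s)"
      by (rule sum.group[symmetric, OF finP _ img]) simp
    also have "\<dots> = (\<Sum>i<M. int i * int (cp k (int i) * cr (n - k) (int i)))"
    proof (rule sum.cong[OF refl])
      fix i
      have set: "{x. x \<in> P \<and> nat (c x) = i} = {s \<in> paths {1,-2} (k + (n - k)) 0. sum_list (take k s) = int i}"
      proof (rule set_eqI)
        fix x
        have "k + (n - k) = n" using kn by simp
        moreover have "x \<in> P \<Longrightarrow> (nat (c x) = i \<longleftrightarrow> c x = int i)" using cnn by fastforce
        ultimately show "x \<in> {x. x \<in> P \<and> nat (c x) = i} \<longleftrightarrow> x \<in> {s \<in> paths {1,-2} (k + (n - k)) 0. sum_list (take k s) = int i}"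
          unfolding P_def c_def by auto
      qed
      have "(\<Sum>s\<in>{x. x \<in> P \<and> nat (c x) = i}. c s) = (\<Sum>s\<in>{x. x \<in> P \<and> nat (c x) = i}. int i)"
        by (rule sum.cong[OF refl]) (use cnn in auto)
      also have "\<dots> = int i * int (card {x. x \<in> P \<and> nat (c x) = i})" by simp
      also have "card {x. x \<in> P \<and> nat (c x) = i} = cp k (int i) * cr (n - k) (int i)"
        unfolding set card_split cp_def cr_def ..
      finally show "(\<Sum>s\<in>{x. x \<in> P \<and> nat (c x) = i}. c s) = int i * int (cp k (int i) * cr (n - k) (int i))" .
    qed
    finally show "(\<Sum>s\<in>P. sum_list (take k s)) = (\<Sum>i<M. int i * int (cp k (int i) * cr (n - k) (int i)))"
      unfolding c_def .
  qed
  finally show ?thesis unfolding PT .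
qed



theorem mainTheorem9:
  fixes T :: "real fps"
  assumes "T * (1 - T)^2 = fps_X" and "fps_nth T 0 = 0"
  shows "(\<lambda>i. of_nat i * fgen i * ggen i) sums
           (3 * fps_compose T (fps_X ^ 3) /
              ((1 - 3 * fps_compose T (fps_X ^ 3))^2 * (1 - fps_compose T (fps_X ^ 3))))
       \<and> (\<forall>N. fps_nth (3 * fps_compose T (fps_X ^ 3) /
              ((1 - 3 * fps_compose T (fps_X ^ 3))^2 * (1 - fps_compose T (fps_X ^ 3)))) (3 * N)
             = of_int (total_area N))"
proof -
  define R where "R = 3 * tau T / ((1 - 3 * tau T)^2 * (1 - tau T))"
  have Req: "3 * fps_compose T (fps_X ^ 3) /
              ((1 - 3 * fps_compose T (fps_X ^ 3))^2 * (1 - fps_compose T (fps_X ^ 3))) = R"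
    unfolding R_def tau_def[OF assms] ..
  have coeff: "fps_nth (\<Sum>i<M. of_nat i * fgen i * ggen i) n = fps_nth R n" if "M \<ge> n + 3" for n M
  proof -
    define m where "m = M - 2"
    have M: "M = m + 2" using that unfolding m_def by simp
    have "lo m ((\<Sum>i<m+2. of_nat i * fgen i * ggen i) - R)"
      unfolding R_def by (rule lo_main[OF assms])
    then have "lo m ((\<Sum>i<M. of_nat i * fgen i * ggen i) - R)" unfolding M .
    moreover have "n < m" using that unfolding m_def by simp
    ultimately show ?thesis unfolding lo_def by simp
  qed
  have sums: "(\<lambda>i. of_nat i * fgen i * ggen i) sums R"
    unfolding sums_def tendsto_fps_iff
  proof
    fix n
    show "eventually (\<lambda>M. fps_nth (\<Sum>i<M. of_nat i * fgen i * ggen i) n = fps_nth R n) sequentially"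
      unfolding eventually_sequentially using coeff by blast
  qed
  have area: "fps_nth R (3 * N) = of_int (total_area N)" for N
  proof -
    define n where "n = 3 * N"
    define M where "M = n + 3"
    have "fps_nth R n = fps_nth (\<Sum>i<M. of_nat i * fgen i * ggen i) n" using coeff[of n M] by (simp add: M_def)
    also have "\<dots> = (\<Sum>i<M. real i * (\<Sum>k=0..n. real (cp k (int i)) * real (cr (n - k) (int i))))"
    proof -
      have "fps_nth (of_nat i * fgen i * ggen i) n = real i * (\<Sum>k=0..n. real (cp k (int i)) * real (cr (n - k) (int i)))" for i
      proof -
        have "fps_nth (of_nat i * fgen i * ggen i) n = real i * fps_nth (fgen i * ggen i) n"
          by (simp only: mult.assoc fps_of_nat[symmetric] fps_mult_left_const_nth)
        then show ?thesis by (simp only: fps_mult_nth fgen_nth ggen_nth)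
      qed
      then show ?thesis by (simp only: fps_sum_nth)
    qed
    also have "\<dots> = (\<Sum>k=0..n. \<Sum>i<M. real i * (real (cp k (int i)) * real (cr (n - k) (int i))))"
      unfolding sum_distrib_left by (rule sum.swap)
    also have "\<dots> = of_int (\<Sum>k=0..n. \<Sum>i<M. int i * int (cp k (int i) * cr (n - k) (int i)))"
      by simp
    also have "\<dots> = of_int (total_area N)"
      unfolding total_area_def n_def M_def using area_formula[of "3 * N" "3 * N + 3"] by simp
    finally show ?thesis unfolding n_def .
  qed
  show ?thesis unfolding Req using sums area by blast
qed

end
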